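(* Let $\Gamma$ be an Arf numerical semigroup with conductor $c$, let $e'\in\Gamma\setminus\{0\}$, and let $a,b\in\mathbb Z$ with $a\ge2$ and $b\ge c$. Then \[ E\big(a\Gamma_{e'}\cup(a(b+e')+\mathbb N),2\big)=\min\{a e',\,E(a\Gamma\cup(ab+\mathbb N),2)+1\}. \] Furthermore, if $\Gamma$ has multiplicity sequence $(d_1,\dots,d_r)$, then \[ E(a\Gamma\cup(ab+\mathbb N),2)=\min\{ad_1,\,ad_2+1,\,\dots,\,ad_{r-1}+r-2,\,a+r-1,\,(b-c)+r\}. \]
   Context: A numerical semigroup is a subset $\Gamma\subseteq\mathbb N$ containing $0$, closed under addition, with finite complement; write $\Gamma=\{0=\rho_1<\rho_2<\cdots\}$, conductor $c=\rho_r$ (least $c$ with $c+\mathbb N\subseteq\Gamma$), genus $g=|\mathbb N\setminus\Gamma|$. $\Gamma$ is Arf if $\rho_i+\rho_j-\rho_k\in\Gamma$ for all $i\ge j\ge k$. Multiplicity sequence: $(d_1,\dots,d_r)$ with $d_i=\rho_{i+1}-\rho_i$. $\Gamma_{e'}=\{0\}\cup(e'+\Gamma)$; $aS=\{as:s\in S\}$; $ab+\mathbb N=\{ab+n:n\in\mathbb N\}$. For a numerical semigroup $S$ with conductor $c_S$ and genus $g_S$, let $D_S(x)=\{s\in S:x-s\in S\}$ and $\delta^2_S(m)=\min\{|D_S(m_1)\cup D_S(m_2)|: m\le m_1<m_2,\ m_i\in S\}$; the second Feng-Rao number $E(S,2)$ is the integer with $\delta^2_S(m)=m+1-2g_S+E(S,2)$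 for all $m\ge 2c_S-1$. *)

theory Defs
  imports Main "HOL-Library.Infinite_Set"
begin

definition numerical_semigroup :: "nat set \<Rightarrow> bool" where
  "numerical_semigroup S \<longleftrightarrow> 0 \<in> S \<and> (\<forall>x\<in>S. \<forall>y\<in>S. x + y \<in> S) \<and> finite (UNIV - S)"

definition conductor :: "nat set \<Rightarrow> nat" where
  "conductor S = (LEAST c. \<forall>n. c \<le> n \<longrightarrow> n \<in> S)"

definition genus :: "nat set \<Rightarrow> nat" where
  "genus S = card (UNIV - S)"

definition is_Arf :: "nat set \<Rightarrow> bool" where
  "is_Arf S \<longleftrightarrow> (\<forall>x\<in>S. \<forall>y\<in>S. \<forall>z\<in>S. x \<ge> y \<and> y \<ge> z \<longrightarrow> x + y - z \<in> S)"

text \<open>rho S i is the i-th element (1-indexed) of S: rho_1 = 0 < rho_2 < ...\<close>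
definition rho :: "nat set \<Rightarrow> nat \<Rightarrow> nat" where
  "rho S i = enumerate S (i - 1)"

definition multiplicity_sequence :: "nat set \<Rightarrow> nat \<Rightarrow> (nat \<Rightarrow> nat) \<Rightarrow> bool" where
  "multiplicity_sequence S r d \<longleftrightarrow> r \<ge> 1 \<and> rho S r = conductor S \<and>
     (\<forall>i\<in>{1..r}. d i = rho S (Suc i) - rho S i)"

definition shiftsg :: "nat set \<Rightarrow> nat \<Rightarrow> nat set" where
  "shiftsg S e = {0} \<union> ((\<lambda>s. e + s) ` S)"

definition scale :: "nat \<Rightarrow> nat set \<Rightarrow> nat set" where
  "scale a S = (\<lambda>s. a * s) ` S"

definition from_on :: "nat \<Rightarrow> nat set" where
  "from_on k = {n. k \<le> n}"

definition Dset :: "nat set \<Rightarrow> nat \<Rightarrow> nat set" where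
  "Dset S x = {s \<in> S. x \<ge> s \<and> x - s \<in> S}"

definition delta2 :: "nat set \<Rightarrow> nat \<Rightarrow> nat" where
  "delta2 S m = (LEAST k. \<exists>m1 m2. m \<le> m1 \<and> m1 < m2 \<and> m1 \<in> S \<and> m2 \<in> S \<and>
                     k = card (Dset S m1 \<union> Dset S m2))"

definition FengRao2 :: "nat set \<Rightarrow> int" where
  "FengRao2 S = (THE E. \<forall>m. int m \<ge> 2 * int (conductor S) - 1 \<longrightarrow>
       int (delta2 S m) = int m + 1 - 2 * int (genus S) + E)"

end

theory Submission
  imports Defs
begin


definition hh :: "nat set \<Rightarrow> nat \<Rightarrow> nat" where
  "hh S k = card {t. t \<notin> S \<and> k \<le> t \<and> t - k \<in> S}"
definition lmin :: "nat set \<Rightarrow> nat" where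
  "lmin X = (LEAST v. v \<in> X)"
definition fr :: "nat set \<Rightarrow> nat" where
  "fr S = lmin {k + hh S k | k. 1 \<le> k}"

lemma lmin_in: "X \<noteq> {} \<Longrightarrow> lmin X \<in> X"
  unfolding lmin_def by (metis LeastI ex_in_conv)
lemma lmin_le: "x \<in> X \<Longrightarrow> lmin X \<le> x"
  unfolding lmin_def by (rule Least_le)
lemma lmin_eqI: "v \<in> X \<Longrightarrow> (\<And>x. x \<in> X \<Longrightarrow> v \<le> x) \<Longrightarrow> lmin X = v"
  unfolding lmin_def by (rule Least_equality) auto
lemma lmin_cong:
  assumes "X \<noteq> {}" "Y \<noteq> {}" "\<And>x. x \<in> X \<Longrightarrow> \<exists>y\<in>Y. y \<le> x"
    "\<And>y. y \<in> Y \<Longrightarrow> \<exists>x\<in>X. x \<le> y"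
  shows "lmin X = lmin Y"
proof -
  obtain y where "y \<in> Y" "y \<le> lmin X" using assms(3) lmin_in[OF assms(1)] by blast
  hence 1: "lmin Y \<le> lmin X" using lmin_le order_trans by blast
  obtain x where "x \<in> X" "x \<le> lmin Y" using assms(4) lmin_in[OF assms(2)] by blast
  hence "lmin X \<le> lmin Y" using lmin_le order_trans by blast
  with 1 show ?thesis by simp
qed

lemma cond_mem:
  assumes "numerical_semigroup S" "conductor S \<le> n" shows "n \<in> S"
proof -
  have "finite (UNIV - S)" using assms(1) unfolding numerical_semigroup_def by blast
  then obtain m where m: "\<forall>n\<in>UNIV - S. n \<le> m" using finite_nat_set_iff_bounded_le by blast
  hence "\<forall>n. Suc m \<le> n \<longrightarrow> n \<in> S" by force
  hence "\<forall>n. conductor S \<le> n \<longrightarrow> n \<in> S" unfolding conductor_def by (rule LeastI)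
  thus ?thesis using assms(2) by blast
qed

lemma gap_lt: "numerical_semigroup S \<Longrightarrow> t \<notin> S \<Longrightarrow> t < conductor S"
  using cond_mem not_le by blast

lemma card_D:
  assumes ns: "numerical_semigroup S" and x: "2 * conductor S \<le> x + 1"
  shows "card (Dset S x) + 2 * genus S = x + 1"
proof -
  define c where "c = conductor S"
  define G where "G = UNIV - S"
  have fG: "finite G" using ns unfolding G_def numerical_semigroup_def by blast
  have Gc: "\<And>t. t \<in> G \<Longrightarrow> t < c" unfolding G_def c_def using gap_lt[OF ns] by blast
  have Gx: "\<And>t. t \<in> G \<Longrightarrow> t \<le> x" using Gc x unfolding c_def by fastforce
  define R where "R = (\<lambda>t. x - t) ` G"
  have cov: "{..x} = Dset S x \<union> (G \<union> R)"
  proof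
    show "{..x} \<subseteq> Dset S x \<union> (G \<union> R)"
    proof
      fix s assume s: "s \<in> {..x}"
      show "s \<in> Dset S x \<union> (G \<union> R)"
      proof (cases "s \<in> S \<and> x - s \<in> S")
        case True thus ?thesis using s unfolding Dset_def by auto
      next
        case False
        hence "s \<in> G \<or> x - s \<in> G" unfolding G_def by auto
        moreover have "x - (x - s) = s" using s by auto
        ultimately show ?thesis unfolding R_def by (metis UnI1 UnI2 image_eqI)
      qed
    qed
    show "Dset S x \<union> (G \<union> R) \<subseteq> {..x}" unfolding Dset_def R_def using Gx by auto
  qed
  have Gx': "\<And>t. t \<notin> S \<Longrightarrow> t \<le> x" using Gx unfolding G_def by blast
  have d1: "Dset S x \<inter> (G \<union> R) = {}" unfolding Dset_def G_def R_def using Gx' by auto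
  have d2: "G \<inter> R = {}"
  proof (rule ccontr)
    assume "G \<inter> R \<noteq> {}"
    then obtain t t' where "t \<in> G" "t' \<in> G" "t = x - t'" unfolding R_def by blast
    moreover have "t < c" "t' < c" "t' \<le> x" using Gc Gx \<open>t \<in> G\<close> \<open>t' \<in> G\<close> by auto
    moreover have "2 * c \<le> x + 1" using x unfolding c_def by simp
    ultimately show False by linarith
  qed
  have cR: "card R = card G" unfolding R_def
  proof (rule card_image, rule inj_onI)
    fix u v assume "u \<in> G" "v \<in> G" "x - u = x - v"
    moreover have "u \<le> x" "v \<le> x" using Gx \<open>u \<in> G\<close> \<open>v \<in> G\<close> by auto
    ultimately show "u = v" by linarith
  qed
  have "x + 1 = card {..x}" by simp
  also have "\<dots> = card (Dset S x) + card (G \<union> R)"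
    unfolding cov by (rule card_Un_disjoint) (use d1 fG in \<open>auto simp: Dset_def R_def\<close>)
  also have "card (G \<union> R) = card G + card R"
    by (rule card_Un_disjoint) (use fG d2 in \<open>auto simp: R_def\<close>)
  finally show ?thesis using cR unfolding genus_def G_def by simp
qed

lemma card_DD:
  assumes ns: "numerical_semigroup S" and x: "2 * conductor S \<le> m1 + 1" and lt: "m1 < m2"
  shows "card (Dset S m1 \<union> Dset S m2) + 2 * genus S = m2 + 1 + hh S (m2 - m1)"
proof -
  define c where "c = conductor S"
  define H where "H = {t. t \<notin> S \<and> m2 - m1 \<le> t \<and> t - (m2 - m1) \<in> S}"
  have Hc: "\<And>t. t \<in> H \<Longrightarrow> t < c" unfolding H_def c_def using gap_lt[OF ns] by blast
  have fH: "finite H" using Hc by (meson finite_nat_set_iff_bounded)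
  have eq: "Dset S m1 - Dset S m2 = (\<lambda>t. m2 - t) ` H"
  proof
    show "Dset S m1 - Dset S m2 \<subseteq> (\<lambda>t. m2 - t) ` H"
    proof
      fix s assume s: "s \<in> Dset S m1 - Dset S m2"
      hence "m2 - s \<in> H" "m2 - (m2 - s) = s" using lt unfolding Dset_def H_def
        by (auto simp: Suc_diff_le diff_diff_right)
      thus "s \<in> (\<lambda>t. m2 - t) ` H" by (metis image_eqI)
    qed
    show "(\<lambda>t. m2 - t) ` H \<subseteq> Dset S m1 - Dset S m2"
    proof
      fix s assume "s \<in> (\<lambda>t. m2 - t) ` H"
      then obtain t where t: "t \<in> H" "s = m2 - t" by blast
      have tc: "t < c" using Hc t by blast
      have "c \<le> s" using tc x lt t unfolding c_def by linarith
      hence sS: "s \<in> S" using cond_mem[OF ns] unfolding c_def by blast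
      have "m1 - s = t - (m2 - m1)" "t \<le> m2" "m2 - s = t" "s \<le> m1"
        using t tc x lt unfolding H_def c_def by auto
      thus "s \<in> Dset S m1 - Dset S m2" using sS t unfolding Dset_def H_def by auto
    qed
  qed
  have "card (Dset S m1 - Dset S m2) = card H" unfolding eq
  proof (rule card_image, rule inj_onI)
    fix u v assume "u \<in> H" "v \<in> H" "m2 - u = m2 - v"
    moreover have "u < c" "v < c" using Hc \<open>u \<in> H\<close> \<open>v \<in> H\<close> by auto
    moreover have "2 * c \<le> m1 + 1" using x unfolding c_def by simp
    ultimately have "u \<le> m2" "v \<le> m2" using lt by linarith+
    with \<open>m2 - u = m2 - v\<close> show "u = v" by simp
  qed
  moreover have "card (Dset S m1 \<union> Dset S m2) = card (Dset S m2) + card (Dset S m1 - Dset S m2)"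
  proof -
    have f: "finite (Dset S k)" for k by (rule finite_subset[of _ "{..k}"]) (auto simp: Dset_def)
    have "Dset S m1 \<union> Dset S m2 = Dset S m2 \<union> (Dset S m1 - Dset S m2)" by blast
    moreover have "card (Dset S m2 \<union> (Dset S m1 - Dset S m2)) = card (Dset S m2) + card (Dset S m1 - Dset S m2)"
      by (rule card_Un_disjoint) (use f in auto)
    ultimately show ?thesis by simp
  qed
  moreover have "card (Dset S m2) + 2 * genus S = m2 + 1" using card_D[OF ns] x lt by simp
  ultimately show ?thesis unfolding hh_def H_def by simp
qed


lemma delta2_eq:
  assumes ns: "numerical_semigroup S" and m: "2 * conductor S \<le> m + 1"
  shows "delta2 S m + 2 * genus S = m + 1 + fr S"
proof -
  define X where "X = {k + hh S k | k. 1 \<le> k}"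
  have "X \<noteq> {}" unfolding X_def by blast
  from lmin_in[OF this] obtain k0 where k0: "1 \<le> k0" "fr S = k0 + hh S k0"
    unfolding fr_def X_def by blast
  have mS: "m \<in> S"
  proof (cases "conductor S = 0")
    case True thus ?thesis using cond_mem[OF ns] by simp
  next
    case False thus ?thesis using cond_mem[OF ns] m by simp
  qed
  have mkS: "m + k0 \<in> S"
  proof (cases "conductor S = 0")
    case True thus ?thesis using cond_mem[OF ns] by simp
  next
    case False thus ?thesis using cond_mem[OF ns] m by simp
  qed
  define v0 where "v0 = card (Dset S m \<union> Dset S (m + k0))"
  have v0: "v0 + 2 * genus S = m + 1 + fr S"
    using card_DD[OF ns m, of "m + k0"] k0 unfolding v0_def by simp
  have "delta2 S m = v0"
    unfolding delta2_def
  proof (rule Least_equality)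
    show "\<exists>m1 m2. m \<le> m1 \<and> m1 < m2 \<and> m1 \<in> S \<and> m2 \<in> S \<and> v0 = card (Dset S m1 \<union> Dset S m2)"
      using mS mkS k0 unfolding v0_def by (intro exI[of _ m] exI[of _ "m + k0"]) auto
  next
    fix y assume "\<exists>m1 m2. m \<le> m1 \<and> m1 < m2 \<and> m1 \<in> S \<and> m2 \<in> S \<and> y = card (Dset S m1 \<union> Dset S m2)"
    then obtain m1 m2 where mm: "m \<le> m1" "m1 < m2" "y = card (Dset S m1 \<union> Dset S m2)" by blast
    have "y + 2 * genus S = m2 + 1 + hh S (m2 - m1)"
      using card_DD[OF ns _ mm(2)] mm m by simp
    moreover have "fr S \<le> (m2 - m1) + hh S (m2 - m1)"
      unfolding fr_def using mm by (intro lmin_le) (auto intro!: exI[of _ "m2 - m1"])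
    ultimately show "v0 \<le> y" using v0 mm by linarith
  qed
  thus ?thesis using v0 by simp
qed

lemma FengRao2_fr:
  assumes ns: "numerical_semigroup S"
  shows "FengRao2 S = int (fr S)"
  unfolding FengRao2_def
proof (rule the_equality)
  show "\<forall>m. 2 * int (conductor S) - 1 \<le> int m \<longrightarrow>
      int (delta2 S m) = int m + 1 - 2 * int (genus S) + int (fr S)"
  proof (intro allI impI)
    fix m assume "2 * int (conductor S) - 1 \<le> int m"
    hence "2 * conductor S \<le> m + 1" by linarith
    from delta2_eq[OF ns this] show "int (delta2 S m) = int m + 1 - 2 * int (genus S) + int (fr S)"
      by linarith
  qed
next
  fix E assume "\<forall>m. 2 * int (conductor S) - 1 \<le> int m \<longrightarrow>
      int (delta2 S m) = int m + 1 - 2 * int (genus S) + E"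
  hence "int (delta2 S (2 * conductor S)) = int (2 * conductor S) + 1 - 2 * int (genus S) + E"
    by (drule_tac x="2 * conductor S" in spec) simp
  moreover have "delta2 S (2 * conductor S) + 2 * genus S = 2 * conductor S + 1 + fr S"
    using delta2_eq[OF ns] by simp
  ultimately show "E = int (fr S)" by linarith
qed



definition Tsg :: "nat \<Rightarrow> nat set \<Rightarrow> nat \<Rightarrow> nat set" where
  "Tsg a G b = scale a G \<union> from_on (a * b)"

definition Yset :: "nat \<Rightarrow> nat set \<Rightarrow> nat \<Rightarrow> nat set" where
  "Yset a G b = {1 + card {x\<in>G. x < b}} \<union> {a * j + hh G j | j. 1 \<le> j}"

lemma scale_mem: "a > 0 \<Longrightarrow> a * x \<in> scale a G \<longleftrightarrow> x \<in> G"
  unfolding scale_def by auto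

lemma Tsg_ns:
  assumes a: "a \<ge> 2" and G0: "0 \<in> G" and Gc: "\<And>x y. x \<in> G \<Longrightarrow> y \<in> G \<Longrightarrow> x + y \<in> G"
  shows "numerical_semigroup (Tsg a G b)"
  unfolding numerical_semigroup_def
proof (intro conjI ballI)
  show "0 \<in> Tsg a G b" using G0 unfolding Tsg_def scale_def by auto
next
  fix x y assume "x \<in> Tsg a G b" "y \<in> Tsg a G b"
  thus "x + y \<in> Tsg a G b" unfolding Tsg_def scale_def from_on_def
    by (auto simp: Gc distrib_left[symmetric])
next
  have "UNIV - Tsg a G b \<subseteq> {..<a*b}" unfolding Tsg_def from_on_def by auto
  thus "finite (UNIV - Tsg a G b)" using finite_subset by blast
qed

lemma hh_fin: "(\<And>t. t \<notin> S \<Longrightarrow> t < (B::nat)) \<Longrightarrow> finite {t. t \<notin> S \<and> k \<le> t \<and> t - k \<in> S}"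
  by (rule finite_subset[of _ "{..<B}"]) (auto simp del: lessThan_iff simp: lessThan_iff)

lemma Tsg_fr:
  assumes a: "a \<ge> 2" and G0: "0 \<in> G" and Gc: "\<And>x y. x \<in> G \<Longrightarrow> y \<in> G \<Longrightarrow> x + y \<in> G"
    and Gb: "\<And>t. t \<notin> G \<Longrightarrow> t < b"
  shows "fr (Tsg a G b) = lmin (Yset a G b)"
  unfolding fr_def
proof (rule lmin_cong)
  define T where "T = Tsg a G b"
  have a0: "a > 0" using a by simp
  have Tb: "\<And>t. t \<notin> T \<Longrightarrow> t < a * b" unfolding T_def Tsg_def from_on_def by auto
  have hhT_fin: "finite {t. t \<notin> T \<and> k \<le> t \<and> t - k \<in> T}" for k using hh_fin[OF Tb] .
  have hhG_fin: "finite {t. t \<notin> G \<and> k \<le> t \<and> t - k \<in> G}" for k using hh_fin[OF Gb] .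
  have low_mult: "hh G j \<le> hh T (a * j)" for j
    unfolding hh_def
  proof (rule card_inj_on_le[of "\<lambda>y. a * y"])
    show "inj_on ((*) a) {t. t \<notin> G \<and> j \<le> t \<and> t - j \<in> G}" using a0 by (auto simp: inj_on_def)
    show "finite {t. t \<notin> T \<and> a * j \<le> t \<and> t - a * j \<in> T}" by (rule hhT_fin)
    show "(*) a ` {t. t \<notin> G \<and> j \<le> t \<and> t - j \<in> G} \<subseteq> {t. t \<notin> T \<and> a * j \<le> t \<and> t - a * j \<in> T}"
    proof
      fix t assume "t \<in> (*) a ` {t. t \<notin> G \<and> j \<le> t \<and> t - j \<in> G}"
      then obtain y where y: "t = a * y" "y \<notin> G" "j \<le> y" "y - j \<in> G" by blast
      have "y < b" using Gb y by blast
      hence "a * y < a * b" using a0 by simp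
      moreover have "a * y - a * j = a * (y - j)" by (simp add: diff_mult_distrib2)
      ultimately show "t \<in> {t. t \<notin> T \<and> a * j \<le> t \<and> t - a * j \<in> T}"
        using y a0 unfolding T_def Tsg_def from_on_def by (auto simp: scale_mem)
    qed
  qed
  have up_mult: "hh T (a * j) \<le> hh G j" for j
  proof -
    have "{t. t \<notin> T \<and> a * j \<le> t \<and> t - a * j \<in> T} \<subseteq> (*) a ` {t. t \<notin> G \<and> j \<le> t \<and> t - j \<in> G}"
    proof
      fix t assume t: "t \<in> {t. t \<notin> T \<and> a * j \<le> t \<and> t - a * j \<in> T}"
      hence "t - a * j \<notin> from_on (a * b)" unfolding T_def Tsg_def from_on_def by auto
      hence "t - a * j \<in> scale a G" using t unfolding T_def Tsg_def by auto
      then obtain x where x: "x \<in> G" "t - a * j = a * x" unfolding scale_def by auto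
      hence tx: "t = a * (x + j)" using t by (simp add: distrib_left) linarith
      hence "x + j \<notin> G" using t a0 unfolding T_def Tsg_def by (auto simp: scale_mem)
      thus "t \<in> (*) a ` {t. t \<notin> G \<and> j \<le> t \<and> t - j \<in> G}" using tx x by auto
    qed
    hence "hh T (a * j) \<le> card ((*) a ` {t. t \<notin> G \<and> j \<le> t \<and> t - j \<in> G})"
      unfolding hh_def by (intro card_mono finite_imageI hhG_fin)
    also have "\<dots> \<le> hh G j" unfolding hh_def by (rule card_image_le[OF hhG_fin])
    finally show ?thesis .
  qed
  have up_one: "hh T 1 \<le> card {x\<in>G. x < b}"
  proof -
    have "{t. t \<notin> T \<and> 1 \<le> t \<and> t - 1 \<in> T} \<subseteq> (\<lambda>x. a * x + 1) ` {x\<in>G. x < b}"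
    proof
      fix t assume t: "t \<in> {t. t \<notin> T \<and> 1 \<le> t \<and> t - 1 \<in> T}"
      hence "t - 1 \<notin> from_on (a * b)" unfolding T_def Tsg_def from_on_def by auto
      hence "t - 1 \<in> scale a G" "t - 1 < a * b" using t unfolding T_def Tsg_def from_on_def by auto
      then obtain x where x: "x \<in> G" "t - 1 = a * x" "a * x < a * b" unfolding scale_def by auto
      hence "x < b" by simp
      thus "t \<in> (\<lambda>x. a * x + 1) ` {x\<in>G. x < b}" using x t by force
    qed
    hence "hh T 1 \<le> card ((\<lambda>x. a * x + 1) ` {x\<in>G. x < b})"
      unfolding hh_def by (intro card_mono finite_imageI) auto
    also have "\<dots> \<le> card {x\<in>G. x < b}" by (rule card_image_le) auto
    finally show ?thesis .
  qed
  have low_nondvd: "1 + card {x\<in>G. x < b} \<le> k + hh T k" if k: "\<not> a dvd k" for k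
  proof -
    define q where "q = k div a"
    define \<rho> where "\<rho> = k mod a"
    have kq: "k = a * q + \<rho>" unfolding q_def \<rho>_def by simp
    have \<rho>: "0 < \<rho>" "\<rho> < a" using k a0 unfolding \<rho>_def by (auto simp: dvd_eq_mod_eq_0)
    have sub: "(\<lambda>x. k + a * x) ` {x\<in>G. x + q < b} \<subseteq> {t. t \<notin> T \<and> k \<le> t \<and> t - k \<in> T}"
    proof
      fix t assume "t \<in> (\<lambda>x. k + a * x) ` {x\<in>G. x + q < b}"
      then obtain x where x: "x \<in> G" "x + q < b" "t = k + a * x" by blast
      have "x + q + 1 \<le> b" using x(2) by simp
      hence "a * (x + q + 1) \<le> a * b" by (rule mult_le_mono2)
      hence "t < a * b" using x(3) kq \<rho> by (simp add: algebra_simps)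
      moreover have "t \<notin> scale a G"
      proof
        assume "t \<in> scale a G"
        then obtain s where "t = a * s" unfolding scale_def by auto
        hence "a dvd t" by simp
        moreover have "t = a * (q + x) + \<rho>" using x(3) kq by (simp add: algebra_simps)
        ultimately have "a dvd \<rho>" by (metis dvd_add_right_iff dvd_triv_left)
        thus False using \<rho> by (meson nat_dvd_not_less)
      qed
      moreover have "t - k \<in> scale a G" using x unfolding scale_def by auto
      ultimately show "t \<in> {t. t \<notin> T \<and> k \<le> t \<and> t - k \<in> T}"
        using x(3) unfolding T_def Tsg_def from_on_def by auto
    qed
    have "card {x\<in>G. x + q < b} = card ((\<lambda>x. k + a * x) ` {x\<in>G. x + q < b})"
      using a0 by (intro card_image[symmetric]) (auto simp: inj_on_def)
    also have "\<dots> \<le> hh T k" unfolding hh_def by (intro card_mono sub hhT_fin)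
    finally have c1: "card {x\<in>G. x + q < b} \<le> hh T k" .
    have "{x\<in>G. x < b} \<subseteq> {x\<in>G. x + q < b} \<union> {b - q..<b}" by auto
    moreover have "finite {x\<in>G. x + q < b}" by (rule finite_subset[of _ "{..<b}"]) auto
    ultimately have "card {x\<in>G. x < b} \<le> card ({x\<in>G. x + q < b} \<union> {b - q..<b})"
      by (intro card_mono) auto
    also have "\<dots> \<le> card {x\<in>G. x + q < b} + card {b - q..<b}" by (rule card_Un_le)
    also have "card {b - q..<b} \<le> q" by simp
    finally have "card {x\<in>G. x < b} \<le> card {x\<in>G. x + q < b} + q" by simp
    moreover have "q \<le> a * q" using a0 by simp
    ultimately show ?thesis using c1 kq \<rho> by linarith
  qed
  show "{k + hh (Tsg a G b) k |k. 1 \<le> k} \<noteq> {}" by blast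
  show "Yset a G b \<noteq> {}" unfolding Yset_def by blast
  show "\<exists>y\<in>Yset a G b. y \<le> x" if xin: "x \<in> {k + hh (Tsg a G b) k |k. 1 \<le> k}" for x
  proof -
    from xin obtain k where k: "1 \<le> k" "x = k + hh T k" unfolding T_def by blast
    show ?thesis
    proof (cases "a dvd k")
      case True
      then obtain j where j: "k = a * j" by (rule dvdE)
      hence "1 \<le> j" using k by (cases j) auto
      hence "a * j + hh G j \<in> Yset a G b" unfolding Yset_def by blast
      moreover have "a * j + hh G j \<le> x" using k j low_mult[of j] by simp
      ultimately show ?thesis by blast
    next
      case False
      have "1 + card {x\<in>G. x < b} \<in> Yset a G b" unfolding Yset_def by blast
      moreover have "1 + card {x\<in>G. x < b} \<le> x" using low_nondvd[OF False] k by simp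
      ultimately show ?thesis by blast
    qed
  qed
  show "\<exists>x\<in>{k + hh (Tsg a G b) k |k. 1 \<le> k}. x \<le> y" if "y \<in> Yset a G b" for y
  proof -
    have "(\<exists>j. 1 \<le> j \<and> y = a * j + hh G j) \<or> y = 1 + card {x\<in>G. x < b}"
      using that unfolding Yset_def by blast
    thus ?thesis
    proof
      assume "\<exists>j. 1 \<le> j \<and> y = a * j + hh G j"
      then obtain j where j: "1 \<le> j" "y = a * j + hh G j" by blast
      have "1 \<le> a * j" using j a0 by simp
      hence "a * j + hh T (a * j) \<in> {k + hh (Tsg a G b) k |k. 1 \<le> k}" unfolding T_def by blast
      moreover have "a * j + hh T (a * j) \<le> y" using up_mult[of j] j by simp
      ultimately show ?thesis by blast
    next
      assume y: "y = 1 + card {x\<in>G. x < b}"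
      have "1 + hh T 1 \<in> {k + hh (Tsg a G b) k |k. 1 \<le> k}" unfolding T_def by blast
      moreover have "1 + hh T 1 \<le> y" using up_one y by simp
      ultimately show ?thesis by blast
    qed
  qed
qed



lemma ns_infinite: "numerical_semigroup S \<Longrightarrow> infinite S"
proof
  assume "numerical_semigroup S" "finite S"
  hence "finite (S \<union> (UNIV - S))" unfolding numerical_semigroup_def by blast
  thus False by simp
qed

lemma enum_count:
  fixes S :: "nat set"
  assumes "infinite S" shows "card {x\<in>S. x < enumerate S n} = n"
proof -
  have "{x\<in>S. x < enumerate S n} = enumerate S ` {..<n}"
  proof
    show "{x\<in>S. x < enumerate S n} \<subseteq> enumerate S ` {..<n}"
    proof
      fix x assume x: "x \<in> {x\<in>S. x < enumerate S n}"
      then obtain m where m: "enumerate S m = x" using enumerate_Ex[OF assms] by blast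
      hence "m < n" using x assms by auto
      thus "x \<in> enumerate S ` {..<n}" using m by blast
    qed
    show "enumerate S ` {..<n} \<subseteq> {x\<in>S. x < enumerate S n}"
      using assms enumerate_in_set by auto
  qed
  moreover have "inj_on (enumerate S) {..<n}"
  proof (rule inj_onI)
    fix x y assume "enumerate S x = enumerate S y"
    hence "enumerate S x \<le> enumerate S y" "enumerate S y \<le> enumerate S x" by auto
    thus "x = y" using assms by simp
  qed
  ultimately show ?thesis by (simp add: card_image)
qed

lemma enum_between:
  fixes S :: "nat set"
  assumes "infinite S" "enumerate S n < x" "x < enumerate S (Suc n)" shows "x \<notin> S"
proof
  assume "x \<in> S"
  then obtain m where m: "enumerate S m = x" using enumerate_Ex[OF assms(1)] by blast
  hence "n < m" "m < Suc n" using assms by auto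
  thus False by simp
qed

lemma partC:
  assumes ns: "numerical_semigroup G" and arf: "is_Arf G" and ms: "multiplicity_sequence G r d"
    and bc: "conductor G \<le> b" and a: "a \<ge> 1"
  shows "lmin (Yset a G b) = lmin ({a * d i + i - 1 | i. i \<in> {1..<r}} \<union> {a + r - 1, b - conductor G + r})"
proof (rule lmin_cong)
  define c where "c = conductor G"
  define e where "e = enumerate G"
  define H where "H j = {t. t \<notin> G \<and> j \<le> t \<and> t - j \<in> G}" for j
  have inf: "infinite G" by (rule ns_infinite[OF ns])
  have r1: "r \<ge> 1" and erc: "e (r - 1) = c" and dd: "\<And>i. i \<in> {1..r} \<Longrightarrow> d i = e i - e (i - 1)"
    using ms unfolding multiplicity_sequence_def rho_def e_def c_def by auto
  have eG: "e n \<in> G" for n unfolding e_def by (rule enumerate_in_set[OF inf])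
  have emono: "m < n \<Longrightarrow> e m < e n" for m n unfolding e_def using inf by simp
  have einj: "e m = e n \<Longrightarrow> m = n" for m n
  proof -
    assume "e m = e n"
    hence "e m \<le> e n" "e n \<le> e m" by auto
    thus "m = n" unfolding e_def using inf by simp
  qed
  have arf': "\<And>x y z. x \<in> G \<Longrightarrow> y \<in> G \<Longrightarrow> z \<in> G \<Longrightarrow> y \<le> x \<Longrightarrow> z \<le> y \<Longrightarrow> x + y - z \<in> G"
    using arf unfolding is_Arf_def by blast
  have ebetw: "e n < x \<Longrightarrow> x < e (Suc n) \<Longrightarrow> x \<notin> G" for n x
    unfolding e_def using enum_between[OF inf] by blast
  have ecount: "card {x\<in>G. x < e n} = n" for n unfolding e_def by (rule enum_count[OF inf])
  have Hfin: "finite (H j)" for j unfolding H_def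
    by (rule hh_fin[of G c]) (use gap_lt[OF ns] c_def in auto)
  have hhH: "hh G j = card (H j)" for j unfolding hh_def H_def by simp
  have N: "1 + card {x\<in>G. x < b} = b - c + r"
  proof -
    have "{x\<in>G. x < b} = {x\<in>G. x < c} \<union> {c..<b}"
      using cond_mem[OF ns] bc unfolding c_def by auto
    moreover have "card ({x\<in>G. x < c} \<union> {c..<b}) = card {x\<in>G. x < c} + card {c..<b}"
      by (rule card_Un_disjoint) auto
    moreover have "card {x\<in>G. x < c} = r - 1" using ecount[of "r - 1"] erc by simp
    ultimately show ?thesis using r1 bc unfolding c_def by simp
  qed
  have lowH: "m \<le> hh G j" if m: "m \<le> r - 1" and j: "1 \<le> j" and big: "\<And>n. n < m \<Longrightarrow> j < d (Suc n)" for m j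
  proof -
    have "(\<lambda>n. e n + j) ` {..<m} \<subseteq> H j"
    proof
      fix t assume "t \<in> (\<lambda>n. e n + j) ` {..<m}"
      then obtain n where n: "n < m" "t = e n + j" by blast
      have "d (Suc n) = e (Suc n) - e n" using dd[of "Suc n"] n m by simp
      hence "t < e (Suc n)" using big[OF n(1)] n(2) by simp
      moreover have "e n < t" using n j by simp
      ultimately have "t \<notin> G" using ebetw by blast
      thus "t \<in> H j" using n eG unfolding H_def by simp
    qed
    moreover have "inj_on (\<lambda>n. e n + j) {..<m}"
      by (intro inj_onI) (use einj in simp)
    ultimately have "card ((\<lambda>n. e n + j) ` {..<m}) \<le> card (H j)"
      using Hfin by (intro card_mono) auto
    thus ?thesis using \<open>inj_on _ _\<close> hhH by (simp add: card_image)
  qed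
  have upH1: "hh G 1 \<le> r - 1"
  proof -
    have "H 1 \<subseteq> (\<lambda>x. x + 1) ` {x\<in>G. x < c}"
    proof
      fix t assume t: "t \<in> H 1"
      hence "t < c" using gap_lt[OF ns] unfolding H_def c_def by blast
      hence "t - 1 \<in> {x\<in>G. x < c}" using t unfolding H_def by auto
      moreover have "t = (t - 1) + 1" using t unfolding H_def by auto
      ultimately show "t \<in> (\<lambda>x. x + 1) ` {x\<in>G. x < c}" by blast
    qed
    hence "card (H 1) \<le> card ((\<lambda>x. x + 1) ` {x\<in>G. x < c})"
      by (intro card_mono) (auto intro: finite_subset[of _ "{..<c}"])
    also have "\<dots> \<le> card {x\<in>G. x < c}" by (rule card_image_le) (auto intro: finite_subset[of _ "{..<c}"])
    also have "\<dots> = r - 1" using ecount[of "r - 1"] erc by simp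
    finally show ?thesis using hhH by simp
  qed
  have upHd: "hh G (d i) \<le> i - 1" if i: "i \<in> {1..<r}" for i
  proof -
    have di: "d i = e i - e (i - 1)" using dd i by auto
    have lt: "e (i - 1) < e i" using emono i by simp
    have Si: "Suc (i - 1) = i" using i by simp
    have "H (d i) \<subseteq> (\<lambda>x. x + d i) ` {x\<in>G. x < e (i - 1)}"
    proof
      fix t assume t: "t \<in> H (d i)"
      define x where "x = t - d i"
      have xG: "x \<in> G" and tG: "t \<notin> G" and tx: "t = x + d i"
        using t unfolding H_def x_def by auto
      have "x < e (i - 1)"
      proof (rule ccontr)
        assume "\<not> x < e (i - 1)"
        hence "x = e (i - 1) \<or> e (i - 1) < x" by auto
        thus False
        proof
          assume "x = e (i - 1)"
          hence "t = e i" using tx di lt by simp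
          thus False using tG eG by simp
        next
          assume gt: "e (i - 1) < x"
          have "e i \<le> x"
          proof (rule ccontr)
            assume "\<not> e i \<le> x"
            hence "x < e (Suc (i - 1))" using Si by simp
            thus False using ebetw[OF gt] xG by blast
          qed
          hence "x + e i - e (i - 1) \<in> G"
            using lt by (intro arf'[OF xG eG eG]) auto
          moreover have "x + e i - e (i - 1) = t" using tx di lt by simp
          ultimately show False using tG by simp
        qed
      qed
      thus "t \<in> (\<lambda>x. x + d i) ` {x\<in>G. x < e (i - 1)}" using xG tx by blast
    qed
    hence "card (H (d i)) \<le> card ((\<lambda>x. x + d i) ` {x\<in>G. x < e (i - 1)})"
      by (intro card_mono) (auto intro: finite_subset[of _ "{..<e (i - 1)}"])
    also have "\<dots> \<le> card {x\<in>G. x < e (i - 1)}"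
      by (rule card_image_le) (auto intro: finite_subset[of _ "{..<e (i - 1)}"])
    also have "\<dots> = i - 1" by (rule ecount)
    finally show ?thesis using hhH by simp
  qed
  show "Yset a G b \<noteq> {}" unfolding Yset_def by blast
  show "{a * d i + i - 1 | i. i \<in> {1..<r}} \<union> {a + r - 1, b - conductor G + r} \<noteq> {}" by blast
  show "\<exists>y\<in>{a * d i + i - 1 | i. i \<in> {1..<r}} \<union> {a + r - 1, b - conductor G + r}. y \<le> x"
    if xin: "x \<in> Yset a G b" for x
  proof -
    have "x = 1 + card {x\<in>G. x < b} \<or> (\<exists>j. 1 \<le> j \<and> x = a * j + hh G j)"
      using xin unfolding Yset_def by blast
    thus ?thesis
    proof
      assume "x = 1 + card {x\<in>G. x < b}"
      thus ?thesis using N unfolding c_def by auto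
    next
      assume "\<exists>j. 1 \<le> j \<and> x = a * j + hh G j"
      then obtain j where j: "1 \<le> j" "x = a * j + hh G j" by blast
      define I where "I = {i \<in> {1..<r}. d i \<le> j}"
      show ?thesis
      proof (cases "I = {}")
        case True
        have "r - 1 \<le> hh G j"
        proof (rule lowH[OF _ j(1)])
          fix n assume "n < r - 1"
          hence "Suc n \<in> {1..<r}" by auto
          moreover have "Suc n \<notin> I" using True by simp
          ultimately show "j < d (Suc n)" unfolding I_def by auto
        qed simp
        moreover have "a \<le> a * j" using j by simp
        ultimately have "a + r - 1 \<le> x" using j r1 by linarith
        thus ?thesis by blast
      next
        case False
        define i0 where "i0 = Min I"
        have fI: "finite I" unfolding I_def by simp
        have i0I: "i0 \<in> I" unfolding i0_def using Min_in[OF fI False] .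
        hence i0: "i0 \<in> {1..<r}" "d i0 \<le> j" unfolding I_def by auto
        have "i0 - 1 \<le> hh G j"
        proof (rule lowH[OF _ j(1)])
          show "i0 - 1 \<le> r - 1" using i0 by auto
          fix n assume n: "n < i0 - 1"
          hence "Suc n \<in> {1..<r}" "Suc n < i0" using i0 by auto
          have "Suc n \<notin> I"
          proof
            assume "Suc n \<in> I"
            hence "i0 \<le> Suc n" unfolding i0_def by (rule Min_le[OF fI])
            thus False using \<open>Suc n < i0\<close> by simp
          qed
          thus "j < d (Suc n)" using \<open>Suc n \<in> {1..<r}\<close> unfolding I_def by auto
        qed
        moreover have "a * d i0 \<le> a * j" using i0 by simp
        ultimately have "a * d i0 + i0 - 1 \<le> x" using j i0 by linarith
        moreover have "a * d i0 + i0 - 1 \<in> {a * d i + i - 1 | i. i \<in> {1..<r}}" using i0 by blast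
        ultimately show ?thesis by blast
      qed
    qed
  qed
  show "\<exists>x\<in>Yset a G b. x \<le> y"
    if yin: "y \<in> {a * d i + i - 1 | i. i \<in> {1..<r}} \<union> {a + r - 1, b - conductor G + r}" for y
  proof -
    have "(\<exists>i\<in>{1..<r}. y = a * d i + i - 1) \<or> y = a + r - 1 \<or> y = b - c + r"
      using yin unfolding c_def by blast
    thus ?thesis
    proof (elim disjE)
      assume "\<exists>i\<in>{1..<r}. y = a * d i + i - 1"
      then obtain i where i: "i \<in> {1..<r}" "y = a * d i + i - 1" by blast
      have "e (i - 1) < e i" using emono i by simp
      hence "1 \<le> d i" using dd i by auto
      hence "a * d i + hh G (d i) \<in> Yset a G b" unfolding Yset_def by blast
      moreover have "a * d i + hh G (d i) \<le> y" using upHd[OF i(1)] i by auto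
      ultimately show ?thesis by blast
    next
      assume y: "y = a + r - 1"
      have "a * 1 + hh G 1 \<in> Yset a G b" unfolding Yset_def by blast
      moreover have "a * 1 + hh G 1 \<le> y" using upH1 y r1 by simp
      ultimately show ?thesis by blast
    next
      assume "y = b - c + r"
      thus ?thesis using N unfolding Yset_def by auto
    qed
  qed
qed



lemma shift_facts:
  assumes ns: "numerical_semigroup G" and eG: "e \<in> G" and e0: "e \<noteq> 0"
    and Gb0: "\<forall>t. t \<notin> G \<longrightarrow> t < b"
  shows "0 \<in> shiftsg G e"
    and "\<And>x y. x \<in> shiftsg G e \<Longrightarrow> y \<in> shiftsg G e \<Longrightarrow> x + y \<in> shiftsg G e"
    and "\<And>t. t \<notin> shiftsg G e \<Longrightarrow> t < b + e"
    and "card {x\<in>shiftsg G e. x < b + e} = card {x\<in>G. x < b} + 1"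
    and "\<And>j. 1 \<le> j \<Longrightarrow> j \<notin> shiftsg G e \<Longrightarrow> hh (shiftsg G e) j = hh G j + 1"
    and "hh (shiftsg G e) e = 0"
    and "\<And>j. 1 \<le> j \<Longrightarrow> j \<in> shiftsg G e \<Longrightarrow> e \<le> j"
proof -
  have Gb: "\<And>t. t \<notin> G \<Longrightarrow> t < b" using Gb0 by blast
  define G' where "G' = shiftsg G e"
  have mem: "x \<in> G' \<longleftrightarrow> x = 0 \<or> (e \<le> x \<and> x - e \<in> G)" for x
  proof
    assume "x \<in> G'"
    thus "x = 0 \<or> (e \<le> x \<and> x - e \<in> G)" unfolding G'_def shiftsg_def by auto
  next
    assume h: "x = 0 \<or> (e \<le> x \<and> x - e \<in> G)"
    show "x \<in> G'"
    proof (cases "x = 0")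
      case True thus ?thesis unfolding G'_def shiftsg_def by simp
    next
      case False
      hence "x = e + (x - e)" "x - e \<in> G" using h by auto
      thus ?thesis unfolding G'_def shiftsg_def by (metis UnI2 image_eqI)
    qed
  qed
  have Gc: "x \<in> G \<Longrightarrow> y \<in> G \<Longrightarrow> x + y \<in> G" for x y using ns unfolding numerical_semigroup_def by blast
  show "0 \<in> shiftsg G e" unfolding shiftsg_def by simp
  show cl: "x + y \<in> shiftsg G e" if "x \<in> shiftsg G e" "y \<in> shiftsg G e" for x y
  proof -
    have "x \<in> G'" "y \<in> G'" using that unfolding G'_def by auto
    moreover have "x - e + (y - e + e) \<in> G" if "x - e \<in> G" "y - e \<in> G" using that Gc eG by simp
    ultimately have "x + y \<in> G'" unfolding mem by (auto simp: add.assoc)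
    thus ?thesis unfolding G'_def by simp
  qed
  show "t < b + e" if "t \<notin> shiftsg G e" for t
    using that Gb[of "t - e"] unfolding G'_def[symmetric] mem by linarith
  have "{x\<in>G'. x < b + e} = insert 0 ((\<lambda>x. x + e) ` {x\<in>G. x < b})"
  proof
    show "{x\<in>G'. x < b + e} \<subseteq> insert 0 ((\<lambda>x. x + e) ` {x\<in>G. x < b})"
    proof
      fix x assume x: "x \<in> {x\<in>G'. x < b + e}"
      show "x \<in> insert 0 ((\<lambda>x. x + e) ` {x\<in>G. x < b})"
      proof (cases "x = 0")
        case False
        hence "x - e \<in> {x\<in>G. x < b}" "x = x - e + e" using x unfolding mem by auto
        thus ?thesis by blast
      qed simp
    qed
    show "insert 0 ((\<lambda>x. x + e) ` {x\<in>G. x < b}) \<subseteq> {x\<in>G'. x < b + e}"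
      using e0 unfolding mem by auto
  qed
  moreover have "0 \<notin> (\<lambda>x. x + e) ` {x\<in>G. x < b}" using e0 by auto
  moreover have "card ((\<lambda>x. x + e) ` {x\<in>G. x < b}) = card {x\<in>G. x < b}" by (rule card_image) auto
  moreover have "finite {x\<in>G. x < b}" by (rule finite_subset[of _ "{..<b}"]) auto
  ultimately show "card {x\<in>shiftsg G e. x < b + e} = card {x\<in>G. x < b} + 1"
    unfolding G'_def by simp
  show "hh (shiftsg G e) j = hh G j + 1" if j: "1 \<le> j" "j \<notin> shiftsg G e" for j
  proof -
    define H where "H = {t. t \<notin> G \<and> j \<le> t \<and> t - j \<in> G}"
    have fH: "finite H" unfolding H_def by (rule hh_fin[of G b]) (rule Gb)
    have "{t. t \<notin> G' \<and> j \<le> t \<and> t - j \<in> G'} = insert j ((\<lambda>u. u + e) ` H)"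
    proof
      show "{t. t \<notin> G' \<and> j \<le> t \<and> t - j \<in> G'} \<subseteq> insert j ((\<lambda>u. u + e) ` H)"
      proof
        fix t assume t: "t \<in> {t. t \<notin> G' \<and> j \<le> t \<and> t - j \<in> G'}"
        show "t \<in> insert j ((\<lambda>u. u + e) ` H)"
        proof (cases "t = j")
          case False
          hence "e \<le> t - j" "t - j - e \<in> G" "t \<notin> G'" "j \<le> t" using t unfolding mem by auto
          hence "t - e \<in> H" "t = t - e + e" using j unfolding H_def mem by (auto simp: add.commute)
          thus ?thesis by blast
        qed simp
      qed
      show "insert j ((\<lambda>u. u + e) ` H) \<subseteq> {t. t \<notin> G' \<and> j \<le> t \<and> t - j \<in> G'}"
      proof
        fix t assume "t \<in> insert j ((\<lambda>u. u + e) ` H)"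
        thus "t \<in> {t. t \<notin> G' \<and> j \<le> t \<and> t - j \<in> G'}"
        proof
          assume "t = j" thus ?thesis using j unfolding G'_def by (simp add: shiftsg_def)
        next
          assume "t \<in> (\<lambda>u. u + e) ` H"
          then obtain u where u: "u \<in> H" "t = u + e" by blast
          hence "u \<notin> G" "j \<le> u" "u - j \<in> G" unfolding H_def by auto
          moreover have "t - j - e = u - j" "e \<le> t - j" using u \<open>j \<le> u\<close> by auto
          ultimately show ?thesis using u e0 unfolding mem by auto
        qed
      qed
    qed
    moreover have "j \<notin> (\<lambda>u. u + e) ` H" using e0 unfolding H_def by auto
    moreover have "card ((\<lambda>u. u + e) ` H) = card H" by (rule card_image) auto
    ultimately show ?thesis unfolding hh_def G'_def[symmetric] H_def[symmetric] using fH by simp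
  qed
  have emp: "{t. t \<notin> G' \<and> e \<le> t \<and> t - e \<in> G'} = {}"
  proof -
    have "t \<in> G'" if "e \<le> t" "t - e \<in> G'" for t
    proof -
      have "e \<in> G'" unfolding mem using eG ns unfolding numerical_semigroup_def by simp
      hence "e + (t - e) \<in> G'" using cl that unfolding G'_def by blast
      thus ?thesis using that by simp
    qed
    thus ?thesis by blast
  qed
  show "hh (shiftsg G e) e = 0" unfolding hh_def G'_def[symmetric] emp by simp
  show "e \<le> j" if "1 \<le> j" "j \<in> shiftsg G e" for j
    using that unfolding G'_def[symmetric] mem by auto
qed



theorem corollary3p12:
  fixes \<Gamma> :: "nat set" and e' a b :: nat
  assumes "numerical_semigroup \<Gamma>" and "is_Arf \<Gamma>"
    and "e' \<in> \<Gamma>" and "e' \<noteq> 0"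
    and "a \<ge> 2" and "b \<ge> conductor \<Gamma>"
  shows "FengRao2 (scale a (shiftsg \<Gamma> e') \<union> from_on (a * (b + e'))) =
           min (int (a * e')) (FengRao2 (scale a \<Gamma> \<union> from_on (a * b)) + 1)
       \<and> (\<forall>r d. multiplicity_sequence \<Gamma> r d \<longrightarrow>
           FengRao2 (scale a \<Gamma> \<union> from_on (a * b)) =
             Min ({int (a * d i) + int i - 1 | i. i \<in> {1..<r}} \<union>
                  {int a + int r - 1, (int b - int (conductor \<Gamma>)) + int r}))"
proof -
  note ns = assms(1)
  define G' where "G' = shiftsg \<Gamma> e'"
  have G0: "0 \<in> \<Gamma>" and Gc: "\<And>x y. x \<in> \<Gamma> \<Longrightarrow> y \<in> \<Gamma> \<Longrightarrow> x + y \<in> \<Gamma>"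
    using ns unfolding numerical_semigroup_def by auto
  have Gb: "\<And>t. t \<notin> \<Gamma> \<Longrightarrow> t < b" using gap_lt[OF ns] assms(6) by fastforce
  have Gb0: "\<forall>t. t \<notin> \<Gamma> \<longrightarrow> t < b" using Gb by blast
  note sf = shift_facts[OF ns assms(3) assms(4) Gb0, folded G'_def]
  have T: "FengRao2 (scale a \<Gamma> \<union> from_on (a * b)) = int (lmin (Yset a \<Gamma> b))"
    using FengRao2_fr[OF Tsg_ns[OF assms(5) G0 Gc]] Tsg_fr[OF assms(5) G0 Gc Gb]
    unfolding Tsg_def by simp
  have T': "FengRao2 (scale a G' \<union> from_on (a * (b + e'))) = int (lmin (Yset a G' (b + e')))"
    using FengRao2_fr[OF Tsg_ns[OF assms(5) sf(1) sf(2)]] Tsg_fr[OF assms(5) sf(1) sf(2) sf(3)]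
    unfolding Tsg_def by simp
  define m where "m = lmin (Yset a \<Gamma> b)"
  have a0: "a > 0" using assms(5) by simp
  have "lmin (Yset a G' (b + e')) = min (a * e') (m + 1)"
  proof (rule lmin_eqI)
    have "m \<in> Yset a \<Gamma> b" unfolding m_def by (rule lmin_in) (auto simp: Yset_def)
    hence mcase: "m = 1 + card {x\<in>\<Gamma>. x < b} \<or> (\<exists>j. 1 \<le> j \<and> m = a * j + hh \<Gamma> j)"
      unfolding Yset_def by blast
    show "min (a * e') (m + 1) \<in> Yset a G' (b + e')"
    proof (cases "a * e' \<le> m + 1")
      case True
      have "1 \<le> e'" using assms(4) by simp
      hence "a * e' + hh G' e' \<in> Yset a G' (b + e')" unfolding Yset_def by blast
      thus ?thesis using True sf(6) by simp
    next
      case False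
      from mcase show ?thesis
      proof
        assume "m = 1 + card {x\<in>\<Gamma>. x < b}"
        thus ?thesis using False sf(4) unfolding Yset_def by simp
      next
        assume "\<exists>j. 1 \<le> j \<and> m = a * j + hh \<Gamma> j"
        then obtain j where j: "1 \<le> j" "m = a * j + hh \<Gamma> j" by blast
        have "j \<notin> G'"
        proof
          assume "j \<in> G'"
          hence "e' \<le> j" using sf(7) j by blast
          hence "a * e' \<le> a * j" by simp
          thus False using False j by linarith
        qed
        hence "a * j + hh G' j = m + 1" using sf(5) j by simp
        moreover have "a * j + hh G' j \<in> Yset a G' (b + e')" using j unfolding Yset_def by blast
        ultimately show ?thesis using False by simp
      qed
    qed
    fix x assume "x \<in> Yset a G' (b + e')"
    hence "x = 1 + card {x\<in>G'. x < b + e'} \<or> (\<exists>j. 1 \<le> j \<and> x = a * j + hh G' j)"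
      unfolding Yset_def by blast
    thus "min (a * e') (m + 1) \<le> x"
    proof
      assume "x = 1 + card {x\<in>G'. x < b + e'}"
      moreover have "m \<le> 1 + card {x\<in>\<Gamma>. x < b}" unfolding m_def by (rule lmin_le) (simp add: Yset_def)
      ultimately show ?thesis using sf(4) by simp
    next
      assume "\<exists>j. 1 \<le> j \<and> x = a * j + hh G' j"
      then obtain j where j: "1 \<le> j" "x = a * j + hh G' j" by blast
      show ?thesis
      proof (cases "j \<in> G'")
        case True
        hence "e' \<le> j" using sf(7) j by blast
        hence "a * e' \<le> a * j" by (rule mult_le_mono2)
        hence "a * e' \<le> x" using j by linarith
        thus ?thesis by (rule min.coboundedI1)
      next
        case False
        have "m \<le> a * j + hh \<Gamma> j" unfolding m_def using j by (intro lmin_le) (auto simp: Yset_def)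
        thus ?thesis using sf(5)[OF j(1) False] j by simp
      qed
    qed
  qed
  moreover have imin: "int (min x y) = min (int x) (int y)" for x y :: nat by (simp add: min_def)
  ultimately have part1: "FengRao2 (scale a (shiftsg \<Gamma> e') \<union> from_on (a * (b + e'))) =
           min (int (a * e')) (FengRao2 (scale a \<Gamma> \<union> from_on (a * b)) + 1)"
    using T T' imin[of "a * e'" "m + 1"] unfolding G'_def[symmetric] m_def by (simp del: of_nat_mult)
  have part2: "FengRao2 (scale a \<Gamma> \<union> from_on (a * b)) =
             Min ({int (a * d i) + int i - 1 | i. i \<in> {1..<r}} \<union>
                  {int a + int r - 1, (int b - int (conductor \<Gamma>)) + int r})"
    if ms: "multiplicity_sequence \<Gamma> r d" for r d
  proof -
    define M where "M = {a * d i + i - 1 | i. i \<in> {1..<r}} \<union> {a + r - 1, b - conductor \<Gamma> + r}"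
    have r1: "r \<ge> 1" using ms unfolding multiplicity_sequence_def by simp
    have fM: "finite M" unfolding M_def by simp
    have neM: "M \<noteq> {}" unfolding M_def by simp
    have "lmin (Yset a \<Gamma> b) = lmin M"
      unfolding M_def by (rule partC[OF ns assms(2) ms assms(6)]) (use a0 in simp)
    also have "lmin M = Min M" by (rule lmin_eqI) (use fM neM in auto)
    finally have 1: "FengRao2 (scale a \<Gamma> \<union> from_on (a * b)) = int (Min M)" using T by simp
    have 2: "int (Min M) = Min (int ` M)" by (rule mono_Min_commute) (use fM neM in \<open>auto simp: mono_def\<close>)
    have 3: "int ` M = {int (a * d i) + int i - 1 | i. i \<in> {1..<r}} \<union>
                  {int a + int r - 1, (int b - int (conductor \<Gamma>)) + int r}"
    proof -
      have A: "{a * d i + i - 1 | i. i \<in> {1..<r}} = (\<lambda>i. a * d i + i - 1) ` {1..<r}" by blast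
      have B: "{int (a * d i) + int i - 1 | i. i \<in> {1..<r}} = (\<lambda>i. int (a * d i) + int i - 1) ` {1..<r}" by blast
      have C: "int ` ((\<lambda>i. a * d i + i - 1) ` {1..<r}) = (\<lambda>i. int (a * d i) + int i - 1) ` {1..<r}"
        unfolding image_image by (rule image_cong) (auto simp: of_nat_diff)
      have D: "int ` {a + r - 1, b - conductor \<Gamma> + r} = {int a + int r - 1, (int b - int (conductor \<Gamma>)) + int r}"
        using r1 assms(6) by (simp add: of_nat_diff algebra_simps)
      show ?thesis unfolding M_def image_Un A B C D ..
    qed
    show ?thesis using 1 2 3 by simp
  qed
  show ?thesis using part1 part2 by blast
qed


end
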